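(* Under the standing assumptions below, if $\mathcal P_1,\mathcal P_2$ are finite partitions of $\lambda$ with $\mathcal P_1\prec\mathcal P_2$, then $I(\mathcal P_1)\subseteq I(\mathcal P_2)$.
   Context: Standing assumptions: $G$ is a finite graph with at least one edge which is trivially power-colorable (for every positive integer $n$, every $\chi(G)$-coloring of $G^n$ is of the form $v\mapsto\phi(v_i)$ for some coordinate $i$ and proper coloring $\phi$ of $G$), $k=\chi(G)$, $\lambda$ is an infinite cardinal, and $\Phi$ is a fixed proper $k$-coloring of $G^\lambda$ (vertex set $V(G)^\lambda$, $(v_\xi)$ adjacent to $(w_\xi)$ iff $v_\xi w_\xi\in E(G)$ for all $\xi<\lambda$). A finite partition of $\lambda$ is a partition of $\lambda$ into finitely many nonempty pieces. For a finite partition $\mathcal P$, $V_{\mathcal P}=\{\mathbf v\in V(G^\lambda): \mathbf v\restriction A \text{ is constant for each } A\in\mathcal P\}$, and for $\mathbf v\in V_{\mathcal P}$, $A\in\mathcal P$, $\mathbf v_A\in V(G)$ is the constant value of $\mathbf v$ on $A$. If $\mathcal P=\{A_1,\dots,A_n\}$, the induced subgraph on $V_{\mathcal P}$ is isomorphic to $G^n$ via $\mathbf v\mapsto(\mathbf v_{A_1},\dots,\mathbf v_{A_n})$, so there are $i$ and a proper coloring $\phi$ of $G$ with $\Phi(\mathbf v)=\phi(\mathbf v_{A_i})$ for all $\mathbf v\in V_{\mathcal P}$; since $G$ has an edge, the block $A_i$ is uniquely determined, and it is denoted $I(\mathcal P)$. $\mathcal P_1\prec\mathcal P_2$ ($\mathcal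 P_1$ refines $\mathcal P_2$) means every $A\in\mathcal P_1$ is contained in some $B\in\mathcal P_2$. *)

theory Defs
  imports Main "HOL-Library.FuncSet" "HOL-Library.Disjoint_Sets"
begin

definition fin_graph :: "'v set \<Rightarrow> ('v \<Rightarrow> 'v \<Rightarrow> bool) \<Rightarrow> bool" where
  "fin_graph V E \<longleftrightarrow> finite V \<and> (\<forall>u v. E u v \<longrightarrow> u \<in> V \<and> v \<in> V)
     \<and> (\<forall>u v. E u v \<longrightarrow> E v u) \<and> (\<forall>u. \<not> E u u)"

definition proper_col :: "'v set \<Rightarrow> ('v \<Rightarrow> 'v \<Rightarrow> bool) \<Rightarrow> ('v \<Rightarrow> nat) \<Rightarrow> bool" where
  "proper_col V E c \<longleftrightarrow> (\<forall>u\<in>V. \<forall>v\<in>V. E u v \<longrightarrow> c u \<noteq> c v)"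

definition k_col :: "'v set \<Rightarrow> ('v \<Rightarrow> 'v \<Rightarrow> bool) \<Rightarrow> nat \<Rightarrow> ('v \<Rightarrow> nat) \<Rightarrow> bool" where
  "k_col V E k c \<longleftrightarrow> proper_col V E c \<and> c ` V \<subseteq> {..<k}"

definition chrom :: "'v set \<Rightarrow> ('v \<Rightarrow> 'v \<Rightarrow> bool) \<Rightarrow> nat" where
  "chrom V E = (LEAST k. \<exists>c. k_col V E k c)"

definition powV :: "'v set \<Rightarrow> nat \<Rightarrow> 'v list set" where
  "powV V n = {xs. length xs = n \<and> set xs \<subseteq> V}"

definition powE :: "('v \<Rightarrow> 'v \<Rightarrow> bool) \<Rightarrow> 'v list \<Rightarrow> 'v list \<Rightarrow> bool" where
  "powE E xs ys \<longleftrightarrow> length xs = length ys \<and> (\<forall>i<length xs. E (xs ! i) (ys ! i))"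

definition triv_pow_colorable :: "'v set \<Rightarrow> ('v \<Rightarrow> 'v \<Rightarrow> bool) \<Rightarrow> bool" where
  "triv_pow_colorable V E \<longleftrightarrow>
     (\<forall>n>0. \<forall>c. k_col (powV V n) (powE E) (chrom V E) c \<longrightarrow>
        (\<exists>i<n. \<exists>\<phi>. proper_col V E \<phi> \<and> (\<forall>xs\<in>powV V n. c xs = \<phi> (xs ! i))))"

definition ipowV :: "'i set \<Rightarrow> 'v set \<Rightarrow> ('i \<Rightarrow> 'v) set" where
  "ipowV L V = (L \<rightarrow>\<^sub>E V)"

definition ipowE :: "'i set \<Rightarrow> ('v \<Rightarrow> 'v \<Rightarrow> bool) \<Rightarrow> ('i \<Rightarrow> 'v) \<Rightarrow> ('i \<Rightarrow> 'v) \<Rightarrow> bool" where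
  "ipowE L E x y \<longleftrightarrow> (\<forall>\<xi>\<in>L. E (x \<xi>) (y \<xi>))"

definition fin_partition :: "'i set \<Rightarrow> 'i set set \<Rightarrow> bool" where
  "fin_partition L P \<longleftrightarrow> finite P \<and> partition_on L P"

definition refines :: "'i set set \<Rightarrow> 'i set set \<Rightarrow> bool" where
  "refines P1 P2 \<longleftrightarrow> (\<forall>A\<in>P1. \<exists>B\<in>P2. A \<subseteq> B)"

definition VP :: "'i set \<Rightarrow> 'v set \<Rightarrow> 'i set set \<Rightarrow> ('i \<Rightarrow> 'v) set" where
  "VP L V P = {x \<in> ipowV L V. \<forall>A\<in>P. \<exists>a. \<forall>\<xi>\<in>A. x \<xi> = a}"

definition Iblock :: "'i set \<Rightarrow> 'v set \<Rightarrow> ('v \<Rightarrow> 'v \<Rightarrow> bool) \<Rightarrow> (('i \<Rightarrow> 'v) \<Rightarrow> nat) \<Rightarrow> 'i set set \<Rightarrow> 'i set" where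
  "Iblock L V E \<Phi> P = (THE A. A \<in> P \<and> (\<exists>\<phi>. proper_col V E \<phi> \<and>
      (\<forall>x\<in>VP L V P. \<forall>\<xi>\<in>A. \<Phi> x = \<phi> (x \<xi>))))"

end

theory Submission
  imports Defs
begin

lemma part_disj:
  assumes "partition_on L P" "A \<in> P" "B \<in> P" "A \<noteq> B"
  shows "A \<inter> B = {}"
  using assms by (auto simp: partition_on_def pairwise_def disjnt_def)

lemma part_ne:
  assumes "partition_on L P" "A \<in> P" shows "A \<noteq> {}"
  using assms by (auto simp: partition_on_def)

lemma part_cover:
  assumes "partition_on L P" "\<xi> \<in> L" shows "\<exists>A\<in>P. \<xi> \<in> A"
  using assms by (auto simp: partition_on_def)

lemma part_sub:
  assumes "partition_on L P" "A \<in> P" shows "A \<subseteq> L"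
  using assms by (auto simp: partition_on_def)

lemma Iunique:
  assumes E: "E u v" and fg: "fin_graph V E" and P: "partition_on L P"
    and A: "A \<in> P" and A': "A' \<in> P" and ne: "A \<noteq> A'"
    and pA: "proper_col V E \<phi>" "\<forall>x\<in>VP L V P. \<forall>\<xi>\<in>A. \<Phi> x = \<phi> (x \<xi>)"
    and pA': "proper_col V E \<phi>'" "\<forall>x\<in>VP L V P. \<forall>\<xi>\<in>A'. \<Phi> x = \<phi>' (x \<xi>)"
  shows False
proof -
  have uv: "u \<in> V" "v \<in> V" using E fg by (auto simp: fin_graph_def)
  obtain \<xi> where \<xi>: "\<xi> \<in> A" using part_ne[OF P A] by auto
  obtain \<xi>' where \<xi>': "\<xi>' \<in> A'" using part_ne[OF P A'] by auto
  have dis: "A \<inter> A' = {}" using part_disj[OF P A A' ne] .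
  have key: "\<phi>' w = \<phi> u" if w: "w \<in> V" for w
  proof -
    define x where "x = (\<lambda>\<zeta>\<in>L. if \<zeta> \<in> A then u else w)"
    have "x \<in> VP L V P"
      unfolding VP_def ipowV_def
    proof (intro CollectI conjI ballI)
      show "x \<in> L \<rightarrow>\<^sub>E V" using uv w by (auto simp: x_def)
    next
      fix C assume C: "C \<in> P"
      show "\<exists>a. \<forall>\<zeta>\<in>C. x \<zeta> = a"
      proof (cases "C = A")
        case True then show ?thesis using part_sub[OF P C] by (auto simp: x_def)
      next
        case False
        then have "C \<inter> A = {}" using part_disj[OF P C A] by auto
        then show ?thesis using part_sub[OF P C] by (auto simp: x_def)
      qed
    qed
    then have "\<Phi> x = \<phi> (x \<xi>)" "\<Phi> x = \<phi>' (x \<xi>')" using pA(2) pA'(2) \<xi> \<xi>' by auto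
    moreover have "x \<xi> = u" "x \<xi>' = w" using \<xi> \<xi>' dis part_sub[OF P A] part_sub[OF P A']
      by (auto simp: x_def)
    ultimately show ?thesis by simp
  qed
  have "\<phi>' u \<noteq> \<phi>' v" using pA'(1) uv E by (auto simp: proper_col_def)
  then show False using key uv by simp
qed

lemma Iexists:
  assumes tp: "triv_pow_colorable V E"
    and col: "k_col (ipowV L V) (ipowE L E) (chrom V E) \<Phi>"
    and fp: "fin_partition L P" and Lne: "L \<noteq> {}"
  shows "\<exists>A\<in>P. \<exists>\<phi>. proper_col V E \<phi> \<and> (\<forall>x\<in>VP L V P. \<forall>\<xi>\<in>A. \<Phi> x = \<phi> (x \<xi>))"
proof -
  have P: "partition_on L P" and fin: "finite P" using fp by (auto simp: fin_partition_def)
  obtain ps where ps: "distinct ps" "set ps = P" using finite_distinct_list[OF fin] by blast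
  define n where "n = length ps"
  have Pne: "P \<noteq> {}" using P Lne by (auto simp: partition_on_def)
  have n0: "n > 0" using ps Pne by (auto simp: n_def)
  have psP: "ps ! j \<in> P" if "j < n" for j using that ps by (auto simp: n_def)
  have idx_unique: "j = j'" if "j < n" "j' < n" "\<zeta> \<in> ps ! j" "\<zeta> \<in> ps ! j'" for j j' \<zeta>
  proof (rule ccontr)
    assume "j \<noteq> j'"
    then have "ps ! j \<noteq> ps ! j'" using ps(1) that(1,2) by (simp add: n_def nth_eq_iff_index_eq)
    then have "ps ! j \<inter> ps ! j' = {}" using part_disj[OF P psP psP] that by auto
    then show False using that by auto
  qed
  have idx_ex: "\<exists>j<n. \<zeta> \<in> ps ! j" if zL: "\<zeta> \<in> L" for \<zeta>
  proof -
    obtain A where "A \<in> P" "\<zeta> \<in> A" using part_cover[OF P zL] by auto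
    then show ?thesis using ps by (auto simp: n_def in_set_conv_nth)
  qed
  define blk where "blk \<zeta> = (THE j. j < n \<and> \<zeta> \<in> ps ! j)" for \<zeta>
  have blk: "blk \<zeta> < n \<and> \<zeta> \<in> ps ! blk \<zeta>" if "\<zeta> \<in> L" for \<zeta>
    unfolding blk_def by (rule theI') (use idx_ex[OF that] idx_unique in blast)
  have blk_eq: "blk \<zeta> = j" if "\<zeta> \<in> L" "j < n" "\<zeta> \<in> ps ! j" for \<zeta> j
    using blk[OF that(1)] idx_unique that by blast
  define lift where "lift xs = (\<lambda>\<zeta>\<in>L. xs ! blk \<zeta>)" for xs :: "'a list"
  define c where "c xs = \<Phi> (lift xs)" for xs
  have liftV: "lift xs \<in> ipowV L V" if "xs \<in> powV V n" for xs
    using that blk by (auto simp: lift_def ipowV_def powV_def)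
  have "k_col (powV V n) (powE E) (chrom V E) c"
    unfolding k_col_def proper_col_def
  proof (intro conjI ballI impI)
    fix xs ys assume xs: "xs \<in> powV V n" and ys: "ys \<in> powV V n" and e: "powE E xs ys"
    have "ipowE L E (lift xs) (lift ys)"
      using e xs blk by (auto simp: ipowE_def powE_def powV_def lift_def)
    then show "c xs \<noteq> c ys" using col liftV[OF xs] liftV[OF ys]
      by (auto simp: c_def k_col_def proper_col_def)
  next
    show "c ` powV V n \<subseteq> {..<chrom V E}" using col liftV by (force simp: c_def k_col_def)
  qed
  then obtain i \<phi> where i: "i < n" "proper_col V E \<phi>" and ci: "\<forall>xs\<in>powV V n. c xs = \<phi> (xs ! i)"
    using tp n0 unfolding triv_pow_colorable_def by blast
  have "\<forall>x\<in>VP L V P. \<forall>\<xi>\<in>ps ! i. \<Phi> x = \<phi> (x \<xi>)"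
  proof (intro ballI)
    fix x \<xi> assume x: "x \<in> VP L V P" and \<xi>: "\<xi> \<in> ps ! i"
    have xV: "x \<in> L \<rightarrow>\<^sub>E V" using x by (auto simp: VP_def ipowV_def)
    have const: "x \<zeta> = x \<zeta>'" if jj: "j < n" "\<zeta> \<in> ps ! j" "\<zeta>' \<in> ps ! j" for j \<zeta> \<zeta>'
    proof -
      obtain a where "\<forall>\<zeta>\<in>ps ! j. x \<zeta> = a" using x psP[OF jj(1)] by (auto simp: VP_def)
      then show ?thesis using jj by auto
    qed
    have some: "(SOME \<zeta>. \<zeta> \<in> ps ! j) \<in> ps ! j" if "j < n" for j
      using part_ne[OF P psP[OF that]] by (simp add: some_in_eq)
    define xs where "xs = map (\<lambda>j. x (SOME \<zeta>. \<zeta> \<in> ps ! j)) [0..<n]"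
    have xsV: "xs \<in> powV V n"
      using some part_sub[OF P psP] xV by (fastforce simp: xs_def powV_def)
    have "lift xs = x"
    proof
      fix \<zeta> show "lift xs \<zeta> = x \<zeta>"
      proof (cases "\<zeta> \<in> L")
        case True
        have b: "blk \<zeta> < n" "\<zeta> \<in> ps ! blk \<zeta>" using blk[OF True] by auto
        have "lift xs \<zeta> = xs ! blk \<zeta>" using True by (simp add: lift_def)
        also have "\<dots> = x (SOME y. y \<in> ps ! blk \<zeta>)" using b(1) by (simp add: xs_def)
        also have "\<dots> = x \<zeta>" using const[OF b(1) some[OF b(1)] b(2)] .
        finally show ?thesis .
      next
        case False then show ?thesis using xV by (auto simp: lift_def)
      qed
    qed
    then have "\<Phi> x = \<phi> (xs ! i)" using ci xsV by (auto simp: c_def)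
    also have "xs ! i = x (SOME \<zeta>. \<zeta> \<in> ps ! i)" using i(1) by (simp add: xs_def)
    also have "\<dots> = x \<xi>" using const[OF i(1) some[OF i(1)] \<xi>] .
    finally show "\<Phi> x = \<phi> (x \<xi>)" .
  qed
  then show ?thesis using psP[OF i(1)] i(2) by blast
qed


lemma Ithe:
  assumes "\<exists>u v. E u v" "fin_graph V E" "partition_on L P"
    and "A \<in> P" "proper_col V E \<phi>" "\<forall>x\<in>VP L V P. \<forall>\<xi>\<in>A. \<Phi> x = \<phi> (x \<xi>)"
  shows "Iblock L V E \<Phi> P = A"
  unfolding Iblock_def
proof (rule the_equality)
  show "A \<in> P \<and> (\<exists>\<phi>. proper_col V E \<phi> \<and> (\<forall>x\<in>VP L V P. \<forall>\<xi>\<in>A. \<Phi> x = \<phi> (x \<xi>)))"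
    using assms by blast
next
  fix A' assume "A' \<in> P \<and> (\<exists>\<phi>. proper_col V E \<phi> \<and> (\<forall>x\<in>VP L V P. \<forall>\<xi>\<in>A'. \<Phi> x = \<phi> (x \<xi>)))"
  then obtain \<phi>' where h: "A' \<in> P" "proper_col V E \<phi>'" "\<forall>x\<in>VP L V P. \<forall>\<xi>\<in>A'. \<Phi> x = \<phi>' (x \<xi>)"
    by blast
  obtain u v where uv: "E u v" using assms(1) by blast
  show "A' = A"
  proof (rule ccontr)
    assume "A' \<noteq> A"
    then show False using Iunique[OF uv assms(2,3) assms(4) h(1) _ assms(5,6) h(2,3)] by auto
  qed
qed

theorem mainTheorem16:
  fixes V :: "'v set" and E :: "'v \<Rightarrow> 'v \<Rightarrow> bool" and L :: "'i set"
    and \<Phi> :: "('i \<Rightarrow> 'v) \<Rightarrow> nat" and P1 P2 :: "'i set set"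
  assumes "fin_graph V E"
    and "\<exists>u v. E u v"
    and "triv_pow_colorable V E"
    and "infinite L"
    and "k_col (ipowV L V) (ipowE L E) (chrom V E) \<Phi>"
    and "fin_partition L P1" and "fin_partition L P2"
    and "refines P1 P2"
  shows "Iblock L V E \<Phi> P1 \<subseteq> Iblock L V E \<Phi> P2"
proof -
  have P1: "partition_on L P1" and P2: "partition_on L P2"
    using assms(6,7) by (auto simp: fin_partition_def)
  have Lne: "L \<noteq> {}" using assms(4) by auto
  obtain A \<phi> where A: "A \<in> P1" "proper_col V E \<phi>" "\<forall>x\<in>VP L V P1. \<forall>\<xi>\<in>A. \<Phi> x = \<phi> (x \<xi>)"
    using Iexists[OF assms(3,5,6) Lne] by blast
  have IA: "Iblock L V E \<Phi> P1 = A" using Ithe[OF assms(2,1) P1 A] .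
  obtain B where B: "B \<in> P2" "A \<subseteq> B" using assms(8) A(1) by (auto simp: refines_def)
  obtain \<xi>0 where \<xi>0: "\<xi>0 \<in> A" using part_ne[OF P1 A(1)] by auto
  have "\<forall>x\<in>VP L V P2. \<forall>\<xi>\<in>B. \<Phi> x = \<phi> (x \<xi>)"
  proof (intro ballI)
    fix x \<xi> assume x: "x \<in> VP L V P2" and \<xi>: "\<xi> \<in> B"
    have "x \<in> VP L V P1"
      unfolding VP_def
    proof (intro CollectI conjI ballI)
      show "x \<in> ipowV L V" using x by (simp add: VP_def)
    next
      fix C assume "C \<in> P1"
      then obtain D where "D \<in> P2" "C \<subseteq> D" using assms(8) by (auto simp: refines_def)
      then show "\<exists>a. \<forall>\<xi>\<in>C. x \<xi> = a" using x by (force simp: VP_def)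
    qed
    then have "\<Phi> x = \<phi> (x \<xi>0)" using A(3) \<xi>0 by blast
    moreover obtain a where "\<forall>\<zeta>\<in>B. x \<zeta> = a" using x B(1) by (auto simp: VP_def)
    ultimately show "\<Phi> x = \<phi> (x \<xi>)" using \<xi> \<xi>0 B(2) by auto
  qed
  then have "Iblock L V E \<Phi> P2 = B" using Ithe[OF assms(2,1) P2 B(1) A(2)] by blast
  then show ?thesis using IA B(2) by simp
qed

end
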